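(* Let $\mathcal{H}_A,\mathcal{H}_B,\mathcal{H}_C$ be finite-dimensional Hilbert spaces with $d_A=\dim\mathcal{H}_A$, let $\rho_{ABC}$ be pure, let $Z=\{|j\rangle\}_{j=1}^{d_A}$ be an orthonormal basis of $\mathcal{H}_A$, and let $\mathcal{S}_Z$ be the set of pure states $|\psi\rangle\in\mathcal{H}_A$ unbiased w.r.t. $Z$, i.e. of the form $|\psi\rangle=\sum_j \frac{e^{i\phi_j}}{\sqrt{d_A}}|j\rangle$. Then $$d_A^2\,\big\langle \mathrm{Tr}\big[\mathcal{T}_B(|\psi\rangle\langle\psi|)^2\big]\big\rangle_{\mathcal{S}_Z}=\mathrm{Tr}(\rho_B^2)+H_Q(Z|C),$$ where $\langle\cdot\rangle_{\mathcal{S}_Z}$ is the average over $|\psi\rangle\in\mathcal{S}_Z$ with the phases $\phi_j$ independent and uniformly distributed on $[0,2\pi)$.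
   Context: $\mathcal{T}_B$ is the linear map from operators on $\mathcal{H}_A$ to operators on $\mathcal{H}_B$ given by $\mathcal{T}_B(X)=\mathrm{Tr}_A[(X\otimes I_B)\rho_{AB}]$, with $\rho_{AB}=\mathrm{Tr}_C\rho_{ABC}$. $H_Q(Z|C)=\mathrm{Tr}(\rho_C^2)-\mathrm{Tr}(\tilde\rho_{M_ZC}^2)$, where $\tilde\rho_{M_ZC}=\sum_j|j\rangle\langle j|_{M_Z}\otimes\mathrm{Tr}_A[(|j\rangle\langle j|\otimes I_C)\rho_{AC}]$ for a register $M_Z$ with orthonormal basis $\{|j\rangle\}$; equivalently $H_Q(Z|C)=\mathrm{Tr}(\rho_C^2)-\sum_j\mathrm{Tr}\big[(\mathrm{Tr}_A[(|j\rangle\langle j|\otimes I_C)\rho_{AC}])^2\big]$. *)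

theory Defs
  imports "HOL-Analysis.Analysis"
begin

text \<open>Finite-dimensional Hilbert spaces are modelled as coordinate spaces
  \<open>'a \<Rightarrow> complex\<close> over a finite index type; operators as matrices \<open>'a \<Rightarrow> 'a \<Rightarrow> complex\<close>.
  The tripartite system ABC is indexed by \<open>('a \<times> 'b) \<times> 'c\<close>.\<close>

type_synonym 'a op = "'a \<Rightarrow> 'a \<Rightarrow> complex"

definition mmult :: "'a::finite op \<Rightarrow> 'a op \<Rightarrow> 'a op" where
  "mmult M N = (\<lambda>x y. \<Sum>z\<in>UNIV. M x z * N z y)"

definition trace :: "'a::finite op \<Rightarrow> complex" where
  "trace M = (\<Sum>x\<in>UNIV. M x x)"

definition proj :: "('a \<Rightarrow> complex) \<Rightarrow> 'a op" where
  "proj v = (\<lambda>x y. v x * cnj (v y))"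

definition tensor_id :: "'a op \<Rightarrow> ('a \<times> 'b) op" where
  "tensor_id X = (\<lambda>(a,b) (a',b'). X a a' * (if b = b' then 1 else 0))"

definition ptrace1 :: "('a::finite \<times> 'b) op \<Rightarrow> 'b op" where
  "ptrace1 M = (\<lambda>b b'. \<Sum>a\<in>UNIV. M (a,b) (a,b'))"

definition ptrace2 :: "('a \<times> 'b::finite) op \<Rightarrow> 'a op" where
  "ptrace2 M = (\<lambda>a a'. \<Sum>b\<in>UNIV. M (a,b) (a',b))"

definition swapBC :: "(('a \<times> 'b) \<times> 'c) op \<Rightarrow> (('a \<times> 'c) \<times> 'b) op" where
  "swapBC M = (\<lambda>((a,c),b) ((a',c'),b'). M ((a,b),c) ((a',b'),c'))"

definition rhoAB :: "(('a \<times> 'b) \<times> 'c::finite) op \<Rightarrow> ('a \<times> 'b) op" where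
  "rhoAB \<rho> = ptrace2 \<rho>"

definition rhoAC :: "(('a \<times> 'b::finite) \<times> 'c) op \<Rightarrow> ('a \<times> 'c) op" where
  "rhoAC \<rho> = ptrace2 (swapBC \<rho>)"

definition rhoB :: "(('a::finite \<times> 'b) \<times> 'c::finite) op \<Rightarrow> 'b op" where
  "rhoB \<rho> = ptrace1 (rhoAB \<rho>)"

definition rhoC :: "(('a::finite \<times> 'b::finite) \<times> 'c) op \<Rightarrow> 'c op" where
  "rhoC \<rho> = ptrace1 \<rho>"

definition TB :: "(('a::finite \<times> 'b::finite) \<times> 'c::finite) op \<Rightarrow> 'a op \<Rightarrow> 'b op" where
  "TB \<rho> X = ptrace1 (mmult (tensor_id X) (rhoAB \<rho>))"

text \<open>\<open>H_Q(Z|C) = Tr(\<rho>_C^2) - \<Sum>_j Tr[(Tr_A[(|j\<rangle>\<langle>j| \<otimes> I_C) \<rho>_AC])^2]\<close>,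
  where the orthonormal basis Z is given by the family \<open>z\<close>, \<open>|j\<rangle> = z j\<close>.\<close>
definition HQ :: "(('a::finite \<times> 'b::finite) \<times> 'c::finite) op \<Rightarrow> ('a \<Rightarrow> 'a \<Rightarrow> complex) \<Rightarrow> complex" where
  "HQ \<rho> z = trace (mmult (rhoC \<rho>) (rhoC \<rho>))
     - (\<Sum>j\<in>UNIV. let S = ptrace1 (mmult (tensor_id (proj (z j))) (rhoAC \<rho>))
                  in trace (mmult S S))"

definition orthonormal_basis :: "('a::finite \<Rightarrow> 'a \<Rightarrow> complex) \<Rightarrow> bool" where
  "orthonormal_basis z \<longleftrightarrow>
     (\<forall>j k. (\<Sum>a\<in>UNIV. cnj (z j a) * z k a) = (if j = k then 1 else 0))"

definition pure_state :: "'a::finite op \<Rightarrow> bool" where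
  "pure_state \<rho> \<longleftrightarrow> (\<exists>\<Psi>. (\<Sum>x\<in>UNIV. (cmod (\<Psi> x))\<^sup>2) = 1 \<and> \<rho> = proj \<Psi>)"

definition unbiased_state :: "('a::finite \<Rightarrow> 'a \<Rightarrow> complex) \<Rightarrow> ('a \<Rightarrow> real) \<Rightarrow> 'a \<Rightarrow> complex" where
  "unbiased_state z \<phi> = (\<lambda>a. \<Sum>j\<in>UNIV. exp (\<i> * of_real (\<phi> j)) / of_real (sqrt (real CARD('a))) * z j a)"

definition phase_measure :: "('a::finite \<Rightarrow> real) measure" where
  "phase_measure = PiM UNIV (\<lambda>_. uniform_measure lborel {0..<2*pi})"

end

theory Submission
  imports Defs "HOL-Probability.Probability_Measure"
begin

lemma sum_pair_UNIV: "(\<Sum>p\<in>(UNIV::('x::finite\<times>'y::finite) set). f p) = (\<Sum>x\<in>UNIV. \<Sum>y\<in>UNIV. f (x,y))"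
  by (simp add: sum.cartesian_product UNIV_Times_UNIV[symmetric] del: UNIV_Times_UNIV)

lemma tensor_id_simp: "tensor_id X (a,b) (a',b') = (if b = b' then X a a' else 0)"
  by (simp add: tensor_id_def)

lemma sum_if_delta_mult: fixes b :: "'x::finite" shows "(\<Sum>y\<in>UNIV. (if b = y then c else 0) * f y) = c * (f b :: complex)"
proof -
  have "(\<Sum>y\<in>UNIV. (if b = y then c else 0) * f y) = (\<Sum>y\<in>UNIV. if b = y then c * f b else 0)"
    by (rule sum.cong) auto
  also have "\<dots> = c * f b" by (simp add: sum.delta')
  finally show ?thesis .
qed

lemma TB_expand: "TB \<rho> X b b' = (\<Sum>a\<in>UNIV. \<Sum>a'\<in>UNIV. X a a' * rhoAB \<rho> (a',b) (a,b'))"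
  unfolding TB_def ptrace1_def mmult_def
  by (simp add: sum_pair_UNIV tensor_id_simp sum_if_delta_mult)

lemma TB_lin:
  assumes "finite I"
  shows "TB \<rho> (\<lambda>x y. \<Sum>i\<in>I. s i * X i x y) b b' = (\<Sum>i\<in>I. s i * TB \<rho> (X i) b b')"
proof -
  have "TB \<rho> (\<lambda>x y. \<Sum>i\<in>I. s i * X i x y) b b' = (\<Sum>a\<in>UNIV. \<Sum>a'\<in>UNIV. \<Sum>i\<in>I. s i * (X i a a' * rhoAB \<rho> (a',b) (a,b')))"
    unfolding TB_expand by (simp add: sum_distrib_left mult_ac)
  also have "\<dots> = (\<Sum>a\<in>UNIV. \<Sum>i\<in>I. \<Sum>a'\<in>UNIV. s i * (X i a a' * rhoAB \<rho> (a',b) (a,b')))"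
    by (rule sum.cong[OF refl], rule sum.swap)
  also have "\<dots> = (\<Sum>i\<in>I. \<Sum>a\<in>UNIV. \<Sum>a'\<in>UNIV. s i * (X i a a' * rhoAB \<rho> (a',b) (a,b')))"
    by (rule sum.swap)
  also have "\<dots> = (\<Sum>i\<in>I. s i * TB \<rho> (X i) b b')"
    unfolding TB_expand by (simp add: sum_distrib_left)
  finally show ?thesis .
qed

lemma trace_bilin:
  fixes A :: "'p \<Rightarrow> 'x::finite op" and B :: "'q \<Rightarrow> 'x op"
  assumes "finite P" "finite Q"
  shows "trace (mmult (\<lambda>x y. \<Sum>p\<in>P. s p * A p x y) (\<lambda>x y. \<Sum>q\<in>Q. r q * B q x y))
       = (\<Sum>p\<in>P. \<Sum>q\<in>Q. s p * r q * trace (mmult (A p) (B q)))"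
proof -
  have "trace (mmult (\<lambda>x y. \<Sum>p\<in>P. s p * A p x y) (\<lambda>x y. \<Sum>q\<in>Q. r q * B q x y))
     = (\<Sum>x\<in>UNIV. \<Sum>y\<in>UNIV. \<Sum>p\<in>P. \<Sum>q\<in>Q. s p * r q * (A p x y * B q y x))"
    unfolding trace_def mmult_def by (simp add: sum_product mult_ac)
  also have "\<dots> = (\<Sum>x\<in>UNIV. \<Sum>p\<in>P. \<Sum>y\<in>UNIV. \<Sum>q\<in>Q. s p * r q * (A p x y * B q y x))"
    by (rule sum.cong[OF refl], rule sum.swap)
  also have "\<dots> = (\<Sum>x\<in>UNIV. \<Sum>p\<in>P. \<Sum>q\<in>Q. \<Sum>y\<in>UNIV. s p * r q * (A p x y * B q y x))"
    by (rule sum.cong[OF refl], rule sum.cong[OF refl], rule sum.swap)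
  also have "\<dots> = (\<Sum>p\<in>P. \<Sum>x\<in>UNIV. \<Sum>q\<in>Q. \<Sum>y\<in>UNIV. s p * r q * (A p x y * B q y x))"
    by (rule sum.swap)
  also have "\<dots> = (\<Sum>p\<in>P. \<Sum>q\<in>Q. \<Sum>x\<in>UNIV. \<Sum>y\<in>UNIV. s p * r q * (A p x y * B q y x))"
    by (rule sum.cong[OF refl], rule sum.swap)
  also have "\<dots> = (\<Sum>p\<in>P. \<Sum>q\<in>Q. s p * r q * trace (mmult (A p) (B q)))"
    unfolding trace_def mmult_def by (simp add: sum_distrib_left)
  finally show ?thesis .
qed

definition outer :: "('a \<Rightarrow> complex) \<Rightarrow> ('a \<Rightarrow> complex) \<Rightarrow> 'a op" where
  "outer v w = (\<lambda>x y. v x * cnj (w y))"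

definition EE :: "('a \<Rightarrow> real) \<Rightarrow> 'a \<Rightarrow> complex" where
  "EE \<phi> j = exp (\<i> * of_real (\<phi> j))"

definition cc :: "('a::finite \<Rightarrow> real) \<Rightarrow> 'a \<times> 'a \<Rightarrow> complex" where
  "cc \<phi> p = EE \<phi> (fst p) * cnj (EE \<phi> (snd p)) / of_nat CARD('a)"

lemma pu_term:
  fixes s d a b c e :: complex
  assumes "s * s = d"
  shows "(a / s * b) * (c / s * e) = (a * c / d) * (b * e)"
  unfolding assms[symmetric] by (simp add: mult_ac)

lemma proj_unbiased:
  "proj (unbiased_state z \<phi>) = (\<lambda>x y. \<Sum>p\<in>UNIV. cc \<phi> p * outer (z (fst p)) (z (snd p)) x y)"
proof (intro ext)
  fix x y :: 'a
  define s :: complex where "s = of_real (sqrt (real CARD('a)))"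
  have r: "sqrt (real CARD('a)) * sqrt (real CARD('a)) = real CARD('a)" by simp
  have sq: "s * s = of_nat CARD('a)" unfolding s_def of_real_mult[symmetric] r by simp
  have cs: "cnj s = s" unfolding s_def by (rule complex_cnj_complex_of_real)
  have u: "unbiased_state z \<phi> w = (\<Sum>j\<in>UNIV. EE \<phi> j / s * z j w)" for w
    unfolding unbiased_state_def EE_def s_def ..
  have cu: "cnj (unbiased_state z \<phi> y) = (\<Sum>k\<in>UNIV. cnj (EE \<phi> k) / s * cnj (z k y))"
    unfolding u cnj_sum complex_cnj_mult complex_cnj_divide cs ..
  have "proj (unbiased_state z \<phi>) x y = unbiased_state z \<phi> x * cnj (unbiased_state z \<phi> y)"
    by (simp only: proj_def)
  also have "\<dots> = (\<Sum>j\<in>UNIV. \<Sum>k\<in>UNIV. (EE \<phi> j / s * z j x) * (cnj (EE \<phi> k) / s * cnj (z k y)))"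
    unfolding cu u[of x] by (rule sum_product)
  also have "\<dots> = (\<Sum>j\<in>UNIV. \<Sum>k\<in>UNIV. cc \<phi> (j,k) * outer (z j) (z k) x y)"
    unfolding cc_def outer_def pu_term[OF sq] by simp
  also have "\<dots> = (\<Sum>p\<in>UNIV. cc \<phi> p * outer (z (fst p)) (z (snd p)) x y)"
    by (simp add: sum_pair_UNIV)
  finally show "proj (unbiased_state z \<phi>) x y = (\<Sum>p\<in>UNIV. cc \<phi> p * outer (z (fst p)) (z (snd p)) x y)" .
qed

lemma phase_sum:
  fixes j k l m :: "'a::finite" and \<phi> :: "'a \<Rightarrow> real"
  shows "(\<Sum>x\<in>UNIV. \<i> * of_int ((if x = j then 1 else 0) - (if x = k then 1 else 0) + (if x = l then 1 else 0) - (if x = m then 1 else 0)) * complex_of_real (\<phi> x))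
     = \<i> * of_real (\<phi> j) - \<i> * of_real (\<phi> k) + \<i> * of_real (\<phi> l) - \<i> * of_real (\<phi> m)"
proof -
  have "\<And>x. \<i> * of_int ((if x = j then 1 else 0) - (if x = k then 1 else 0) + (if x = l then 1 else 0) - (if x = m then 1 else 0)) * complex_of_real (\<phi> x)
     = (if x = j then \<i> * of_real (\<phi> j) else 0) - (if x = k then \<i> * of_real (\<phi> k) else 0) + (if x = l then \<i> * of_real (\<phi> l) else 0) - (if x = m then \<i> * of_real (\<phi> m) else 0)"
    by (auto simp: algebra_simps)
  then show ?thesis by (simp add: sum.distrib sum_subtractf)
qed

lemma EE_prod:
  fixes j k l m :: "'a::finite"
  shows "EE \<phi> j * cnj (EE \<phi> k) * EE \<phi> l * cnj (EE \<phi> m)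
    = (\<Prod>x\<in>UNIV. exp (\<i> * of_int ((if x = j then 1 else 0) - (if x = k then 1 else 0) + (if x = l then 1 else 0) - (if x = m then 1 else 0)) * complex_of_real (\<phi> x)))"
  unfolding exp_sum[OF finite, symmetric] phase_sum EE_def exp_cnj
  by (simp add: exp_add[symmetric] exp_diff exp_minus field_simps)


lemma uniform_eq: "uniform_measure lborel {0..<2*pi} = density lborel (\<lambda>x. ennreal (indicator {0..<2*pi} x / (2*pi)))"
  using divide_ennreal[of 1 "2*pi"] unfolding uniform_measure_def
  by (intro density_cong) (auto simp: indicator_def)

lemma phase_int:
  fixes n :: int
  shows "(\<integral>t. exp (\<i> * of_int n * of_real t) \<partial>uniform_measure lborel {0..<2*pi}) = (if n = 0 then 1 else 0)"
proof (cases "n = 0")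
  case True
  interpret prob_space "uniform_measure lborel {0..<2*pi}"
    by (rule prob_space_uniform_measure) auto
  show ?thesis using True by simp
next
  case False
  have "(\<integral>t. exp (\<i> * of_int n * of_real t) \<partial>uniform_measure lborel {0..<2*pi})
     = (\<integral>t. (indicator {0..<2*pi} t / (2*pi)) *\<^sub>R exp (\<i> * of_int n * of_real t) \<partial>lborel)"
    unfolding uniform_eq by (subst integral_density) auto
  also have "\<dots> = (1/(2*pi)) *\<^sub>R (LBINT t:{0..<2*pi}. exp (\<i> * of_int n * of_real t))"
    unfolding set_lebesgue_integral_def
    by (subst integral_scaleR_right[symmetric]) (auto intro!: Bochner_Integration.integral_cong simp: indicator_def)
  also have "(LBINT t:{0..<2*pi}. exp (\<i> * of_int n * of_real t)) = (LBINT t=ereal 0..ereal (2*pi). exp (\<i> * of_int n * of_real t))"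
    using interval_integral_Ico[of 0 "2*pi"] by (metis zero_ereal_def pi_ge_zero mult_nonneg_nonneg zero_le_numeral)
  also have "\<dots> = exp (\<i> * of_int n * of_real (2*pi)) / (\<i> * of_int n) - exp (\<i> * of_int n * of_real 0) / (\<i> * of_int n)"
  proof (rule interval_integral_FTC_finite)
    show "continuous_on {min 0 (2 * pi)..max 0 (2 * pi)} (\<lambda>t. exp (\<i> * of_int n * complex_of_real t))"
      by (intro continuous_intros)
    fix x :: real
    have e: "\<And>t. \<i> * of_int n * complex_of_real t = t *\<^sub>R (\<i> * of_int n)"
      by (simp add: scaleR_conv_of_real mult_ac)
    have "((\<lambda>t. exp (t *\<^sub>R (\<i> * of_int n))) has_vector_derivative exp (x *\<^sub>R (\<i> * of_int n)) * (\<i> * of_int n)) (at x within {min 0 (2 * pi)..max 0 (2 * pi)})"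
      by (rule exp_scaleR_has_vector_derivative_right)
    then have "((\<lambda>t. exp (t *\<^sub>R (\<i> * of_int n)) / (\<i> * of_int n)) has_vector_derivative exp (x *\<^sub>R (\<i> * of_int n)) * (\<i> * of_int n) / (\<i> * of_int n)) (at x within {min 0 (2 * pi)..max 0 (2 * pi)})"
      by (rule has_vector_derivative_divide)
    then show "((\<lambda>t. exp (\<i> * of_int n * complex_of_real t) / (\<i> * of_int n)) has_vector_derivative exp (\<i> * of_int n * complex_of_real x)) (at x within {min 0 (2 * pi)..max 0 (2 * pi)})"
      using False unfolding e by simp
  qed
  also have "exp (\<i> * of_int n * of_real (2*pi)) = 1"
    using exp_integer_2pi[of "of_int n"] by (simp add: mult_ac)
  finally show ?thesis using False by simp
qed

lemma int_EE4:
  fixes j k l m :: "'a::finite"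
  shows "(\<integral>\<phi>. EE \<phi> j * cnj (EE \<phi> k) * EE \<phi> l * cnj (EE \<phi> m) \<partial>phase_measure)
     = (if (j = k \<and> l = m) \<or> (j = m \<and> l = k) then 1 else 0)"
proof -
  define n :: "'a \<Rightarrow> int" where "n x = (if x = j then 1 else 0) - (if x = k then 1 else 0) + (if x = l then 1 else 0) - (if x = m then 1 else 0)" for x
  let ?U = "uniform_measure lborel {0..<2*pi}"
  have ps: "prob_space ?U" by (rule prob_space_uniform_measure) auto
  interpret product_sigma_finite "\<lambda>_::'a. ?U"
    unfolding product_sigma_finite_def using prob_space_imp_sigma_finite[OF ps] by simp
  interpret U: prob_space ?U by (rule ps)
  have int: "integrable ?U (\<lambda>t. exp (\<i> * of_int (n x) * of_real t))" for x
  proof (rule U.integrable_const_bound[where B=1])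
    show "AE t in ?U. norm (exp (\<i> * of_int (n x) * complex_of_real t)) \<le> 1"
      by (simp add: norm_exp_eq_Re)
    show "(\<lambda>t. exp (\<i> * of_int (n x) * complex_of_real t)) \<in> borel_measurable ?U"
      by measurable
  qed
  have "(\<integral>\<phi>. EE \<phi> j * cnj (EE \<phi> k) * EE \<phi> l * cnj (EE \<phi> m) \<partial>phase_measure)
      = (\<integral>\<phi>. (\<Prod>x\<in>UNIV. exp (\<i> * of_int (n x) * of_real (\<phi> x))) \<partial>Pi\<^sub>M UNIV (\<lambda>_. ?U))"
    unfolding phase_measure_def EE_prod n_def ..
  also have "\<dots> = (\<Prod>x\<in>UNIV. \<integral>t. exp (\<i> * of_int (n x) * of_real t) \<partial>?U)"
    by (rule product_integral_prod[where f="\<lambda>x t. exp (\<i> * of_int (n x) * of_real t)"]) (auto intro: int)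
  also have "\<dots> = (\<Prod>x\<in>UNIV. if n x = 0 then 1 else 0)"
    by (simp add: phase_int)
  also have "\<dots> = (if \<forall>x. n x = 0 then 1 else 0)"
    by (auto simp: prod_zero)
  also have "(\<forall>x. n x = 0) \<longleftrightarrow> (j = k \<and> l = m) \<or> (j = m \<and> l = k)"
  proof
    assume h: "\<forall>x. n x = 0"
    have a: "n j = 0" "n k = 0" "n l = 0" "n m = 0" using h by auto
    then show "(j = k \<and> l = m) \<or> (j = m \<and> l = k)"
      unfolding n_def by (auto split: if_splits)
  next
    assume "(j = k \<and> l = m) \<or> (j = m \<and> l = k)"
    then show "\<forall>x. n x = 0" unfolding n_def by auto
  qed
  finally show ?thesis .
qed


lemma compl:
  fixes z :: "'a::finite \<Rightarrow> 'a \<Rightarrow> complex"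
  assumes "orthonormal_basis z"
  shows "(\<Sum>j\<in>UNIV. cnj (z j a) * z j a') = (if a = a' then 1 else 0)"
proof -
  define A :: "complex^'a^'a" where "A = (\<chi> j a. z j a)"
  define B :: "complex^'a^'a" where "B = (\<chi> a k. cnj (z k a))"
  have "A ** B = mat 1"
  proof -
    have "(\<Sum>a\<in>UNIV. z j a * cnj (z k a)) = (if j = k then 1 else 0)" for j k
    proof -
      have "(\<Sum>a\<in>UNIV. z j a * cnj (z k a)) = cnj (\<Sum>a\<in>UNIV. cnj (z j a) * z k a)"
        by (simp add: mult.commute)
      also have "\<dots> = (if j = k then 1 else 0)"
        using assms unfolding orthonormal_basis_def by simp
      finally show ?thesis .
    qed
    then show ?thesis
      unfolding A_def B_def by (simp add: matrix_matrix_mult_def mat_def vec_eq_iff)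
  qed
  then have "B ** A = mat 1" by (rule matrix_left_right_inverse1)
  then have "(B ** A) $ a $ a' = mat 1 $ a $ a'" by simp
  then show ?thesis
    unfolding A_def B_def by (simp add: matrix_matrix_mult_def mat_def)
qed

definition FF :: "(('a \<times> 'b) \<times> 'c \<Rightarrow> complex) \<Rightarrow> ('a \<Rightarrow> 'a \<Rightarrow> complex) \<Rightarrow> 'a \<Rightarrow> 'b \<Rightarrow> 'c \<Rightarrow> complex" where
  "FF \<Psi> z l b c = (\<Sum>a\<in>UNIV. cnj (z l a) * \<Psi> ((a,b),c))"

lemma swap3:
  "(\<Sum>x\<in>UNIV. \<Sum>y\<in>UNIV. \<Sum>w\<in>UNIV. f x y w) = (\<Sum>w\<in>UNIV. \<Sum>y\<in>UNIV. \<Sum>x\<in>UNIV. (f x y w :: complex))"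
proof -
  have "(\<Sum>x\<in>UNIV. \<Sum>y\<in>UNIV. \<Sum>w\<in>UNIV. f x y w) = (\<Sum>x\<in>UNIV. \<Sum>w\<in>UNIV. \<Sum>y\<in>UNIV. f x y w)"
    by (rule sum.cong[OF refl], rule sum.swap)
  also have "\<dots> = (\<Sum>w\<in>UNIV. \<Sum>x\<in>UNIV. \<Sum>y\<in>UNIV. f x y w)" by (rule sum.swap)
  also have "\<dots> = (\<Sum>w\<in>UNIV. \<Sum>y\<in>UNIV. \<Sum>x\<in>UNIV. f x y w)"
    by (rule sum.cong[OF refl], rule sum.swap)
  finally show ?thesis .
qed

lemma gen3:
  "(\<Sum>a\<in>UNIV. \<Sum>a'\<in>UNIV. X a * Y a' * (\<Sum>c\<in>UNIV. P a' c * Q a c))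
   = (\<Sum>c\<in>UNIV. (\<Sum>a'\<in>UNIV. Y a' * P a' c) * (\<Sum>a\<in>UNIV. X a * (Q a c :: complex)))"
proof -
  have "(\<Sum>a\<in>UNIV. \<Sum>a'\<in>UNIV. X a * Y a' * (\<Sum>c\<in>UNIV. P a' c * Q a c))
     = (\<Sum>a\<in>UNIV. \<Sum>a'\<in>UNIV. \<Sum>c\<in>UNIV. (Y a' * P a' c) * (X a * Q a c))"
    by (simp add: sum_distrib_left mult_ac)
  also have "\<dots> = (\<Sum>c\<in>UNIV. \<Sum>a'\<in>UNIV. \<Sum>a\<in>UNIV. (Y a' * P a' c) * (X a * Q a c))"
    by (rule swap3)
  also have "\<dots> = (\<Sum>c\<in>UNIV. (\<Sum>a'\<in>UNIV. Y a' * P a' c) * (\<Sum>a\<in>UNIV. X a * (Q a c :: complex)))"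
    by (simp add: sum_product)
  finally show ?thesis .
qed

lemma sum_delta_mult: fixes x :: "'x::finite" shows "(\<Sum>y\<in>UNIV. (if x = y then 1 else 0) * f y) = (f x :: complex)"
proof -
  have "(\<Sum>y\<in>UNIV. (if x = y then 1 else 0) * f y) = (\<Sum>y\<in>UNIV. if x = y then f y else 0)"
    by (rule sum.cong) auto
  also have "\<dots> = f x" by (simp add: sum.delta')
  finally show ?thesis .
qed

lemma key:
  fixes z :: "'a::finite \<Rightarrow> 'a \<Rightarrow> complex" and \<Psi> :: "('a \<times> 'b) \<times> 'c \<Rightarrow> complex"
  assumes "orthonormal_basis z"
  shows "(\<Sum>a\<in>UNIV. \<Psi> ((a,b),c) * cnj (\<Psi> ((a,b'),c'))) = (\<Sum>j\<in>UNIV. FF \<Psi> z j b c * cnj (FF \<Psi> z j b' c'))"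
proof -
  have "(\<Sum>j\<in>UNIV. FF \<Psi> z j b c * cnj (FF \<Psi> z j b' c'))
      = (\<Sum>j\<in>UNIV. \<Sum>a'\<in>UNIV. \<Sum>a\<in>UNIV. (cnj (z j a) * z j a') * (\<Psi> ((a,b),c) * cnj (\<Psi> ((a',b'),c'))))"
    unfolding FF_def by (simp add: sum_product mult_ac)
  also have "\<dots> = (\<Sum>a\<in>UNIV. \<Sum>a'\<in>UNIV. \<Sum>j\<in>UNIV. (cnj (z j a) * z j a') * (\<Psi> ((a,b),c) * cnj (\<Psi> ((a',b'),c'))))"
    by (rule swap3)
  also have "\<dots> = (\<Sum>a\<in>UNIV. \<Sum>a'\<in>UNIV. (if a = a' then 1 else 0) * (\<Psi> ((a,b),c) * cnj (\<Psi> ((a',b'),c'))))"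
    by (simp add: sum_distrib_right[symmetric] compl[OF assms])
  also have "\<dots> = (\<Sum>a\<in>UNIV. \<Psi> ((a,b),c) * cnj (\<Psi> ((a,b'),c')))"
    by (simp only: sum_delta_mult)
  finally show ?thesis by simp
qed

lemma ptrace_gen: "ptrace1 (mmult (tensor_id X) R) b b' = (\<Sum>a\<in>UNIV. \<Sum>a'\<in>UNIV. X a a' * R (a',b) (a,b'))"
proof -
  have "ptrace1 (mmult (tensor_id X) R) b b' = (\<Sum>a\<in>UNIV. \<Sum>a'\<in>UNIV. \<Sum>y\<in>UNIV. (if b = y then 1 else 0) * (X a a' * R (a',y) (a,b')))"
    unfolding ptrace1_def mmult_def tensor_id_def by (simp add: sum_pair_UNIV mult_ac)
  also have "\<dots> = (\<Sum>a\<in>UNIV. \<Sum>a'\<in>UNIV. X a a' * R (a',b) (a,b'))"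
    by (simp only: sum_delta_mult)
  finally show ?thesis .
qed

lemma rhoAB_proj: "rhoAB (proj \<Psi>) (a',b) (a,b') = (\<Sum>c\<in>UNIV. \<Psi> ((a',b),c) * cnj (\<Psi> ((a,b'),c)))"
  unfolding rhoAB_def ptrace2_def proj_def by simp

lemma rhoAC_proj: "rhoAC (proj \<Psi>) (a',c) (a,c') = (\<Sum>b\<in>UNIV. \<Psi> ((a',b),c) * cnj (\<Psi> ((a,b),c')))"
  unfolding rhoAC_def ptrace2_def proj_def swapBC_def by simp

lemma t_formula:
  "TB (proj \<Psi>) (outer (z j) (z l)) b b' = (\<Sum>c\<in>UNIV. FF \<Psi> z l b c * cnj (FF \<Psi> z j b' c))"
proof -
  have "TB (proj \<Psi>) (outer (z j) (z l)) b b' = (\<Sum>a\<in>UNIV. \<Sum>a'\<in>UNIV. z j a * cnj (z l a') * (\<Sum>c\<in>UNIV. \<Psi> ((a',b),c) * cnj (\<Psi> ((a,b'),c))))"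
    unfolding TB_def ptrace_gen rhoAB_proj outer_def ..
  also have "\<dots> = (\<Sum>c\<in>UNIV. FF \<Psi> z l b c * cnj (FF \<Psi> z j b' c))"
    unfolding gen3 FF_def by simp
  finally show ?thesis .
qed

lemma S_formula:
  "ptrace1 (mmult (tensor_id (proj (z j))) (rhoAC (proj \<Psi>))) c c' = (\<Sum>b\<in>UNIV. FF \<Psi> z j b c * cnj (FF \<Psi> z j b c'))"
proof -
  have "ptrace1 (mmult (tensor_id (proj (z j))) (rhoAC (proj \<Psi>))) c c' = (\<Sum>a\<in>UNIV. \<Sum>a'\<in>UNIV. z j a * cnj (z j a') * (\<Sum>b\<in>UNIV. \<Psi> ((a',b),c) * cnj (\<Psi> ((a,b),c'))))"
    unfolding ptrace_gen rhoAC_proj unfolding proj_def ..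
  also have "\<dots> = (\<Sum>b\<in>UNIV. FF \<Psi> z j b c * cnj (FF \<Psi> z j b c'))"
    unfolding gen3 FF_def by simp
  finally show ?thesis .
qed

lemma rhoB_formula:
  fixes z :: "'a::finite \<Rightarrow> 'a \<Rightarrow> complex" and \<Psi> :: "('a \<times> 'b::finite) \<times> 'c::finite \<Rightarrow> complex"
  assumes "orthonormal_basis z"
  shows "rhoB (proj \<Psi>) b b' = (\<Sum>c\<in>UNIV. \<Sum>j\<in>UNIV. FF \<Psi> z j b c * cnj (FF \<Psi> z j b' c))"
proof -
  have "rhoB (proj \<Psi>) b b' = (\<Sum>a\<in>UNIV. \<Sum>c\<in>UNIV. \<Psi> ((a,b),c) * cnj (\<Psi> ((a,b'),c)))"
    unfolding rhoB_def ptrace1_def rhoAB_proj ..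
  also have "\<dots> = (\<Sum>c\<in>UNIV. \<Sum>a\<in>UNIV. \<Psi> ((a,b),c) * cnj (\<Psi> ((a,b'),c)))"
    by (rule sum.swap)
  also have "\<dots> = (\<Sum>c\<in>UNIV. \<Sum>j\<in>UNIV. FF \<Psi> z j b c * cnj (FF \<Psi> z j b' c))"
    by (simp add: key[OF assms])
  finally show ?thesis .
qed

lemma rhoC_formula:
  fixes z :: "'a::finite \<Rightarrow> 'a \<Rightarrow> complex" and \<Psi> :: "('a \<times> 'b::finite) \<times> 'c::finite \<Rightarrow> complex"
  assumes "orthonormal_basis z"
  shows "rhoC (proj \<Psi>) c c' = (\<Sum>b\<in>UNIV. \<Sum>j\<in>UNIV. FF \<Psi> z j b c * cnj (FF \<Psi> z j b c'))"
proof -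
  have "rhoC (proj \<Psi>) c c' = (\<Sum>a\<in>UNIV. \<Sum>b\<in>UNIV. \<Psi> ((a,b),c) * cnj (\<Psi> ((a,b),c')))"
    unfolding rhoC_def ptrace1_def proj_def sum_pair_UNIV ..
  also have "\<dots> = (\<Sum>b\<in>UNIV. \<Sum>a\<in>UNIV. \<Psi> ((a,b),c) * cnj (\<Psi> ((a,b),c')))"
    by (rule sum.swap)
  also have "\<dots> = (\<Sum>b\<in>UNIV. \<Sum>j\<in>UNIV. FF \<Psi> z j b c * cnj (FF \<Psi> z j b c'))"
    by (simp add: key[OF assms])
  finally show ?thesis .
qed

lemma perm4:
  fixes f :: "'x::finite \<Rightarrow> 'y::finite \<Rightarrow> 'u::finite \<Rightarrow> 'v::finite \<Rightarrow> complex"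
  shows "(\<Sum>x\<in>UNIV. \<Sum>y\<in>UNIV. \<Sum>u\<in>UNIV. \<Sum>v\<in>UNIV. f x y u v) = (\<Sum>u\<in>UNIV. \<Sum>v\<in>UNIV. \<Sum>x\<in>UNIV. \<Sum>y\<in>UNIV. f x y u v)"
  using sum.swap[of "\<lambda>p q. f (fst p) (snd p) (fst q) (snd q)" UNIV UNIV] by (simp add: sum_pair_UNIV)

lemma perm2_4:
  fixes f :: "'x::finite \<Rightarrow> 'y::finite \<Rightarrow> 'u1::finite \<Rightarrow> 'u2::finite \<Rightarrow> 'u3::finite \<Rightarrow> 'u4::finite \<Rightarrow> complex"
  shows "(\<Sum>x\<in>UNIV. \<Sum>y\<in>UNIV. \<Sum>u1\<in>UNIV. \<Sum>u2\<in>UNIV. \<Sum>u3\<in>UNIV. \<Sum>u4\<in>UNIV. f x y u1 u2 u3 u4)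
       = (\<Sum>u1\<in>UNIV. \<Sum>u2\<in>UNIV. \<Sum>u3\<in>UNIV. \<Sum>u4\<in>UNIV. \<Sum>x\<in>UNIV. \<Sum>y\<in>UNIV. f x y u1 u2 u3 u4)"
  using sum.swap[of "\<lambda>p q. f (fst p) (snd p) (fst q) (fst (snd q)) (fst (snd (snd q))) (snd (snd (snd q)))" UNIV UNIV]
  by (simp add: sum_pair_UNIV)

lemma A1:
  fixes z :: "'a::finite \<Rightarrow> 'a \<Rightarrow> complex" and \<Psi> :: "('a \<times> 'b::finite) \<times> 'c::finite \<Rightarrow> complex"
  assumes "orthonormal_basis z"
  shows "(\<lambda>b b'. \<Sum>j\<in>UNIV. TB (proj \<Psi>) (outer (z j) (z j)) b b') = rhoB (proj \<Psi>)"
proof (intro ext)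
  fix b b'
  show "(\<Sum>j\<in>UNIV. TB (proj \<Psi>) (outer (z j) (z j)) b b') = rhoB (proj \<Psi>) b b'"
    unfolding t_formula rhoB_formula[OF assms] by (rule sum.swap)
qed

lemma A3:
  fixes z :: "'a::finite \<Rightarrow> 'a \<Rightarrow> complex" and \<Psi> :: "('a \<times> 'b::finite) \<times> 'c::finite \<Rightarrow> complex"
  shows "trace (mmult (TB (proj \<Psi>) (outer (z j) (z j))) (TB (proj \<Psi>) (outer (z j) (z j))))
    = (let S = ptrace1 (mmult (tensor_id (proj (z j))) (rhoAC (proj \<Psi>))) in trace (mmult S S))"
proof -
  let ?F = "FF \<Psi> z j"
  have "trace (mmult (TB (proj \<Psi>) (outer (z j) (z j))) (TB (proj \<Psi>) (outer (z j) (z j))))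
     = (\<Sum>b\<in>UNIV. \<Sum>b'\<in>UNIV. \<Sum>c\<in>UNIV. \<Sum>c'\<in>UNIV. (?F b c * cnj (?F b' c)) * (?F b' c' * cnj (?F b c')))"
    by (simp add: trace_def mmult_def t_formula sum_product)
  also have "\<dots> = (\<Sum>c\<in>UNIV. \<Sum>c'\<in>UNIV. \<Sum>b\<in>UNIV. \<Sum>b'\<in>UNIV. (?F b c * cnj (?F b' c)) * (?F b' c' * cnj (?F b c')))"
    by (rule perm4)
  also have "\<dots> = (let S = ptrace1 (mmult (tensor_id (proj (z j))) (rhoAC (proj \<Psi>))) in trace (mmult S S))"
  proof -
    have Sf: "ptrace1 (mmult (tensor_id (proj (z j))) (rhoAC (proj \<Psi>))) = (\<lambda>c c'. \<Sum>b\<in>UNIV. ?F b c * cnj (?F b c'))"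
      by (intro ext) (rule S_formula)
    show ?thesis unfolding Let_def Sf
      by (simp add: trace_def mmult_def sum_product mult_ac)
  qed
  finally show ?thesis .
qed

lemma A2:
  fixes z :: "'a::finite \<Rightarrow> 'a \<Rightarrow> complex" and \<Psi> :: "('a \<times> 'b::finite) \<times> 'c::finite \<Rightarrow> complex"
  assumes "orthonormal_basis z"
  shows "(\<Sum>j\<in>UNIV. \<Sum>l\<in>UNIV. trace (mmult (TB (proj \<Psi>) (outer (z j) (z l))) (TB (proj \<Psi>) (outer (z l) (z j)))))
    = trace (mmult (rhoC (proj \<Psi>)) (rhoC (proj \<Psi>)))"
proof -
  let ?F = "FF \<Psi> z"
  have "(\<Sum>j\<in>UNIV. \<Sum>l\<in>UNIV. trace (mmult (TB (proj \<Psi>) (outer (z j) (z l))) (TB (proj \<Psi>) (outer (z l) (z j)))))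
     = (\<Sum>j\<in>UNIV. \<Sum>l\<in>UNIV. \<Sum>b\<in>UNIV. \<Sum>b'\<in>UNIV. \<Sum>c\<in>UNIV. \<Sum>c'\<in>UNIV. (?F l b c * cnj (?F j b' c)) * (?F j b' c' * cnj (?F l b c')))"
    by (simp add: trace_def mmult_def t_formula sum_product)
  also have "\<dots> = (\<Sum>l\<in>UNIV. \<Sum>j\<in>UNIV. \<Sum>b\<in>UNIV. \<Sum>b'\<in>UNIV. \<Sum>c\<in>UNIV. \<Sum>c'\<in>UNIV. (?F l b c * cnj (?F j b' c)) * (?F j b' c' * cnj (?F l b c')))"
    by (rule sum.swap)
  also have "\<dots> = (\<Sum>b\<in>UNIV. \<Sum>b'\<in>UNIV. \<Sum>c\<in>UNIV. \<Sum>c'\<in>UNIV. \<Sum>l\<in>UNIV. \<Sum>j\<in>UNIV. (?F l b c * cnj (?F j b' c)) * (?F j b' c' * cnj (?F l b c')))"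
    by (rule perm2_4)
  also have "\<dots> = (\<Sum>c\<in>UNIV. \<Sum>c'\<in>UNIV. \<Sum>b\<in>UNIV. \<Sum>b'\<in>UNIV. \<Sum>l\<in>UNIV. \<Sum>j\<in>UNIV. (?F l b c * cnj (?F j b' c)) * (?F j b' c' * cnj (?F l b c')))"
    by (rule perm4)
  also have "\<dots> = trace (mmult (rhoC (proj \<Psi>)) (rhoC (proj \<Psi>)))"
    by (simp add: trace_def mmult_def rhoC_formula[OF assms] sum_product mult_ac)
  finally show ?thesis .
qed

lemma sum_if_out: "(\<Sum>x\<in>A. if P then f x else 0) = (if P then (\<Sum>x\<in>A. f x) else (0::'b::comm_monoid_add))"
  by simp
lemma split_cond:
  fixes K :: "'a::finite \<times> 'a \<Rightarrow> 'a \<times> 'a \<Rightarrow> complex"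
  shows "(\<Sum>j\<in>UNIV. \<Sum>k\<in>UNIV. \<Sum>l\<in>UNIV. \<Sum>m\<in>UNIV. (if (j = k \<and> l = m) \<or> (j = m \<and> l = k) then K (j,k) (l,m) else 0))
   = (\<Sum>j\<in>UNIV. \<Sum>l\<in>UNIV. K (j,j) (l,l)) + (\<Sum>j\<in>UNIV. \<Sum>l\<in>UNIV. K (j,l) (l,j)) - (\<Sum>j\<in>UNIV. K (j,j) (j,j))"
proof -
  have pw: "(if (j = k \<and> l = m) \<or> (j = m \<and> l = k) then K (j,k) (l,m) else 0)
    = (if k = j then (if m = l then K (j,k) (l,m) else 0) else 0) + (if m = j then (if k = l then K (j,k) (l,m) else 0) else 0)
      - (if k = j then (if m = l then (if l = j then K (j,k) (l,m) else 0) else 0) else 0)" for j k l m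
    by auto
  show ?thesis
    unfolding pw by (simp add: sum.distrib sum_subtractf sum.delta sum.delta' sum_if_out del: sum.If_cases)
qed


lemma borel_measurable_cnj_fun[measurable]: "(cnj :: complex \<Rightarrow> complex) \<in> borel_measurable borel"
  by (intro borel_measurable_continuous_onI continuous_intros)

theorem lemma1:
  fixes \<rho> :: "(('a::finite \<times> 'b::finite) \<times> 'c::finite) op"
    and z :: "'a \<Rightarrow> 'a \<Rightarrow> complex"
  assumes "pure_state \<rho>"
    and "orthonormal_basis z"
  shows "(of_nat CARD('a))\<^sup>2 *
           (\<integral>\<phi>. (let T = TB \<rho> (proj (unbiased_state z \<phi>)) in trace (mmult T T)) \<partial>phase_measure)
         = trace (mmult (rhoB \<rho>) (rhoB \<rho>)) + HQ \<rho> z"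
proof -
  obtain \<Psi> where \<rho>: "\<rho> = proj \<Psi>" using assms(1) unfolding pure_state_def by blast
  define d :: complex where "d = of_nat CARD('a)"
  have d0: "d \<noteq> 0" unfolding d_def by simp
  define t where "t p = TB \<rho> (outer (z (fst p)) (z (snd p)))" for p :: "'a \<times> 'a"
  define K where "K p q = trace (mmult (t p) (t q))" for p q
  have T: "TB \<rho> (proj (unbiased_state z \<phi>)) = (\<lambda>b b'. \<Sum>p\<in>UNIV. cc \<phi> p * t p b b')" for \<phi>
    unfolding proj_unbiased t_def by (intro ext) (rule TB_lin, simp)
  have f: "(let T = TB \<rho> (proj (unbiased_state z \<phi>)) in trace (mmult T T))
      = (\<Sum>p\<in>UNIV. \<Sum>q\<in>UNIV. K p q * (cc \<phi> p * cc \<phi> q))" for \<phi>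
    unfolding Let_def T trace_bilin[OF finite finite] K_def by (simp add: mult_ac)
  have ps: "prob_space (uniform_measure lborel {0..<2*pi})" by (rule prob_space_uniform_measure) auto
  interpret FP: finite_product_prob_space "\<lambda>_::'a. uniform_measure lborel {0..<2*pi}" "UNIV :: 'a set"
    by (simp add: finite_product_prob_space_def finite_product_sigma_finite_def product_prob_space_def
      product_sigma_finite_def product_prob_space_axioms_def finite_product_sigma_finite_axioms_def ps prob_space_imp_sigma_finite)
  interpret P: prob_space "phase_measure :: ('a \<Rightarrow> real) measure"
    unfolding phase_measure_def by (rule FP.prob_space_axioms)
  have card1: "real CARD('a) \<ge> 1" by (simp add: Suc_le_eq)
  have intcc: "integrable phase_measure (\<lambda>\<phi>. cc \<phi> p * cc \<phi> q)" for p q :: "'a \<times> 'a"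
  proof -
    have "norm (cc \<phi> p * cc \<phi> q) = 1 / (real CARD('a) * real CARD('a))" for \<phi>
      by (simp add: cc_def EE_def norm_mult norm_divide)
    also have "\<dots> \<le> 1"
    proof -
      have "1 \<le> real CARD('a) * real CARD('a)" using mult_mono[OF card1 card1] by simp
      then show ?thesis by simp
    qed
    finally have b: "AE \<phi> in phase_measure. norm (cc \<phi> p * cc \<phi> q) \<le> 1" by simp
    have m: "(\<lambda>\<phi>. cc \<phi> p * cc \<phi> q) \<in> borel_measurable phase_measure"
      unfolding cc_def EE_def phase_measure_def by measurable
    show ?thesis
      by (rule finite_measure.integrable_const_bound[OF P.finite_measure_axioms b m])
  qed
  have intval: "(\<integral>\<phi>. cc \<phi> p * cc \<phi> q \<partial>phase_measure)
      = (if (fst p = snd p \<and> fst q = snd q) \<or> (fst p = snd q \<and> fst q = snd p) then 1 else 0) / d^2" for p q :: "'a \<times> 'a"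
  proof -
    have "cc \<phi> p * cc \<phi> q = (EE \<phi> (fst p) * cnj (EE \<phi> (snd p)) * EE \<phi> (fst q) * cnj (EE \<phi> (snd q))) / d^2" for \<phi> :: "'a \<Rightarrow> real"
      by (simp add: cc_def d_def power2_eq_square)
    then have "(\<integral>\<phi>. cc \<phi> p * cc \<phi> q \<partial>phase_measure)
        = (\<integral>\<phi>. EE \<phi> (fst p) * cnj (EE \<phi> (snd p)) * EE \<phi> (fst q) * cnj (EE \<phi> (snd q)) \<partial>phase_measure) / d^2"
      by simp
    then show ?thesis by (simp add: int_EE4)
  qed
  have "(\<integral>\<phi>. (let T = TB \<rho> (proj (unbiased_state z \<phi>)) in trace (mmult T T)) \<partial>phase_measure)
      = (\<integral>\<phi>. (\<Sum>p\<in>UNIV. \<Sum>q\<in>UNIV. K p q * (cc \<phi> p * cc \<phi> q)) \<partial>phase_measure)"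
    unfolding f ..
  also have "\<dots> = (\<Sum>p\<in>UNIV. \<integral>\<phi>. (\<Sum>q\<in>UNIV. K p q * (cc \<phi> p * cc \<phi> q)) \<partial>phase_measure)"
    by (subst Bochner_Integration.integral_sum) (auto intro!: integrable_sum integrable_mult_right intcc)
  also have "\<dots> = (\<Sum>p\<in>UNIV. \<Sum>q\<in>UNIV. K p q * (\<integral>\<phi>. cc \<phi> p * cc \<phi> q \<partial>phase_measure))"
    by (intro sum.cong refl, subst Bochner_Integration.integral_sum) (auto intro: integrable_mult_right intcc)
  finally have I: "(\<integral>\<phi>. (let T = TB \<rho> (proj (unbiased_state z \<phi>)) in trace (mmult T T)) \<partial>phase_measure)
      = (\<Sum>p\<in>UNIV. \<Sum>q\<in>UNIV. K p q * ((if (fst p = snd p \<and> fst q = snd q) \<or> (fst p = snd q \<and> fst q = snd p) then 1 else 0) / d^2))"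
    unfolding intval .
  have "d^2 * (\<Sum>p\<in>UNIV. \<Sum>q\<in>UNIV. K p q * ((if (fst p = snd p \<and> fst q = snd q) \<or> (fst p = snd q \<and> fst q = snd p) then 1 else 0) / d^2))
      = (\<Sum>p\<in>UNIV. \<Sum>q\<in>UNIV. (if (fst p = snd p \<and> fst q = snd q) \<or> (fst p = snd q \<and> fst q = snd p) then K p q else 0))"
    using d0 by (simp add: sum_distrib_left) (intro sum.cong refl, simp)
  also have "\<dots> = (\<Sum>j\<in>UNIV. \<Sum>k\<in>UNIV. \<Sum>l\<in>UNIV. \<Sum>m\<in>UNIV. (if (j = k \<and> l = m) \<or> (j = m \<and> l = k) then K (j,k) (l,m) else 0))"
    by (simp add: sum_pair_UNIV)
  also have "\<dots> = (\<Sum>j\<in>UNIV. \<Sum>l\<in>UNIV. K (j,j) (l,l)) + (\<Sum>j\<in>UNIV. \<Sum>l\<in>UNIV. K (j,l) (l,j)) - (\<Sum>j\<in>UNIV. K (j,j) (j,j))"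
    by (rule split_cond)
  also have "(\<Sum>j\<in>UNIV. \<Sum>l\<in>UNIV. K (j,j) (l,l)) = trace (mmult (rhoB \<rho>) (rhoB \<rho>))"
  proof -
    have "trace (mmult (\<lambda>b b'. \<Sum>j\<in>UNIV. 1 * t (j,j) b b') (\<lambda>b b'. \<Sum>l\<in>UNIV. 1 * t (l,l) b b'))
        = (\<Sum>j\<in>UNIV. \<Sum>l\<in>UNIV. 1 * 1 * K (j,j) (l,l))"
      unfolding K_def by (rule trace_bilin) auto
    moreover have "(\<lambda>b b'. \<Sum>j\<in>UNIV. 1 * t (j,j) b b') = rhoB \<rho>"
      unfolding t_def \<rho> using A1[OF assms(2)] by simp
    ultimately show ?thesis by simp
  qed
  also have "(\<Sum>j\<in>UNIV. \<Sum>l\<in>UNIV. K (j,l) (l,j)) = trace (mmult (rhoC \<rho>) (rhoC \<rho>))"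
    unfolding K_def t_def \<rho> using A2[OF assms(2)] by simp
  also have "(\<Sum>j\<in>UNIV. K (j,j) (j,j)) = (\<Sum>j\<in>UNIV. let S = ptrace1 (mmult (tensor_id (proj (z j))) (rhoAC \<rho>)) in trace (mmult S S))"
    unfolding K_def t_def \<rho> fst_conv snd_conv by (rule sum.cong[OF refl], rule A3)
  finally have "d^2 * (\<integral>\<phi>. (let T = TB \<rho> (proj (unbiased_state z \<phi>)) in trace (mmult T T)) \<partial>phase_measure)
      = trace (mmult (rhoB \<rho>) (rhoB \<rho>)) + HQ \<rho> z"
    unfolding I HQ_def by simp
  then show ?thesis unfolding d_def .
qed

end
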